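(* Consider all equations $i\psi_t+\psi_{xx}+|\psi|^\gamma\psi+V(t,x)\psi=0$, with $\gamma$ ranging over nonzero reals and $V$ over arbitrary smooth complex-valued functions. The intersection of their maximal Lie invariance algebras $A^{\max}(\gamma,V)$ (the kernel algebra of the class) is the one-dimensional algebra $\langle M\rangle$, where $M=i(\psi\partial_\psi-\psi^*\partial_{\psi^*})$.
   Context: $\psi(t,x)$ is a complex unknown function. Lie symmetries are vector fields on the space of $(t,x,\psi,\psi^* )$, with $\psi^*$ (complex conjugate) treated as an independent variable. $A^{\max}(\gamma,V)$ denotes the Lie algebra of all vector fields generating local point symmetries of the given equation. *)

theory Defs
  imports "HOL-Analysis.Analysis"
begin

definition dirder :: "'a::real_normed_vector \<Rightarrow> ('a \<Rightarrow> 'b::real_normed_vector) \<Rightarrow> 'a \<Rightarrow> 'b" where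
  "dirder b f p = vector_derivative (\<lambda>s::real. f (p + s *\<^sub>R b)) (at 0)"

definition Cinf_on :: "'a::euclidean_space set \<Rightarrow> ('a \<Rightarrow> 'b::real_normed_vector) \<Rightarrow> bool" where
  "Cinf_on S f \<longleftrightarrow>
     (\<forall>bs. set bs \<subseteq> Basis \<longrightarrow>
        continuous_on S (foldr dirder bs f) \<and>
        (\<forall>b\<in>Basis. \<forall>p\<in>S. (\<lambda>s::real. foldr dirder bs f (p + s *\<^sub>R b)) differentiable (at 0)))"

section \<open>Space of (t, x, u, v), psi = u + i v\<close>

type_synonym pt = "real \<times> real \<times> real \<times> real"

definition Omega :: "pt set" where
  "Omega = {(t, x, u, v). (u, v) \<noteq> (0, 0)}"

text \<open>Vector fields Q = tau d_t + xi d_x + etaU d_u + etaV d_v, as maps pt => pt.\<close>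
definition tau :: "(pt \<Rightarrow> pt) \<Rightarrow> pt \<Rightarrow> real" where "tau Q p = fst (Q p)"
definition xi :: "(pt \<Rightarrow> pt) \<Rightarrow> pt \<Rightarrow> real" where "xi Q p = fst (snd (Q p))"
definition etaU :: "(pt \<Rightarrow> pt) \<Rightarrow> pt \<Rightarrow> real" where "etaU Q p = fst (snd (snd (Q p)))"
definition etaV :: "(pt \<Rightarrow> pt) \<Rightarrow> pt \<Rightarrow> real" where "etaV Q p = snd (snd (snd (Q p)))"

text \<open>M = i(psi d_psi - psi* d_psi*) = -v d_u + u d_v.\<close>
definition M_field :: "pt \<Rightarrow> pt" where
  "M_field p = (case p of (t, x, u, v) \<Rightarrow> (0, 0, - v, u))"

record jet =
  jt :: real  jx :: real  ju :: real  jv :: real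
  jut :: real  jvt :: real  jux :: real  jvx :: real
  jutt :: real  jutx :: real  juxx :: real
  jvtt :: real  jvtx :: real  jvxx :: real

definition base :: "jet \<Rightarrow> pt" where
  "base J = (jt J, jx J, ju J, jv J)"

definition lift :: "(pt \<Rightarrow> real) \<Rightarrow> jet \<Rightarrow> real" where
  "lift F J = F (base J)"

definition jpd :: "((real \<Rightarrow> real) \<Rightarrow> jet \<Rightarrow> jet) \<Rightarrow> (jet \<Rightarrow> real) \<Rightarrow> (jet \<Rightarrow> real) \<Rightarrow> jet \<Rightarrow> real" where
  "jpd upd sel G J = deriv (\<lambda>s. G (upd (\<lambda>_. s) J)) (sel J)"

text \<open>Total derivatives, applied to functions of jets of order at most one.\<close>
definition Dt :: "(jet \<Rightarrow> real) \<Rightarrow> jet \<Rightarrow> real" where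
  "Dt G J = jpd jt_update jt G J
     + jut J * jpd ju_update ju G J + jvt J * jpd jv_update jv G J
     + jutt J * jpd jut_update jut G J + jvtt J * jpd jvt_update jvt G J
     + jutx J * jpd jux_update jux G J + jvtx J * jpd jvx_update jvx G J"

definition Dx :: "(jet \<Rightarrow> real) \<Rightarrow> jet \<Rightarrow> real" where
  "Dx G J = jpd jx_update jx G J
     + jux J * jpd ju_update ju G J + jvx J * jpd jv_update jv G J
     + jutx J * jpd jut_update jut G J + jvtx J * jpd jvt_update jvt G J
     + juxx J * jpd jux_update jux G J + jvxx J * jpd jvx_update jvx G J"

definition prc :: "(pt \<Rightarrow> pt) \<Rightarrow> ((jet \<Rightarrow> real) \<Rightarrow> jet \<Rightarrow> real) \<Rightarrow> (jet \<Rightarrow> real)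
                    \<Rightarrow> (jet \<Rightarrow> real) \<Rightarrow> (jet \<Rightarrow> real) \<Rightarrow> jet \<Rightarrow> real" where
  "prc Q D E wt wx J = D E J - wt J * D (lift (tau Q)) J - wx J * D (lift (xi Q)) J"

definition pr2 :: "(pt \<Rightarrow> pt) \<Rightarrow> (jet \<Rightarrow> real) \<Rightarrow> jet \<Rightarrow> real" where
  "pr2 Q F J =
    (let pu = lift (etaU Q); pv = lift (etaV Q);
         ut = prc Q Dt pu jut jux; ux = prc Q Dx pu jut jux;
         vt = prc Q Dt pv jvt jvx; vx = prc Q Dx pv jvt jvx;
         utt = prc Q Dt ut jutt jutx; utx = prc Q Dx ut jutt jutx; uxx = prc Q Dx ux jutx juxx;
         vtt = prc Q Dt vt jvtt jvtx; vtx = prc Q Dx vt jvtt jvtx; vxx = prc Q Dx vx jvtx jvxx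
     in lift (tau Q) J * jpd jt_update jt F J + lift (xi Q) J * jpd jx_update jx F J
      + pu J * jpd ju_update ju F J + pv J * jpd jv_update jv F J
      + ut J * jpd jut_update jut F J + vt J * jpd jvt_update jvt F J
      + ux J * jpd jux_update jux F J + vx J * jpd jvx_update jvx F J
      + utt J * jpd jutt_update jutt F J + utx J * jpd jutx_update jutx F J
      + uxx J * jpd juxx_update juxx F J
      + vtt J * jpd jvtt_update jvtt F J + vtx J * jpd jvtx_update jvtx F J
      + vxx J * jpd jvxx_update jvxx F J)"

definition nls :: "real \<Rightarrow> (real \<times> real \<Rightarrow> complex) \<Rightarrow> jet \<Rightarrow> complex" where
  "nls \<gamma> V J =
     \<i> * Complex (jut J) (jvt J) + Complex (juxx J) (jvxx J)
     + of_real (cmod (Complex (ju J) (jv J)) powr \<gamma>) * Complex (ju J) (jv J)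
     + V (jt J, jx J) * Complex (ju J) (jv J)"

text \<open>Infinitesimal invariance criterion for the system Re = 0, Im = 0
  (equivalently the equation and its complex conjugate).\<close>
definition is_Lie_symmetry :: "real \<Rightarrow> (real \<times> real \<Rightarrow> complex) \<Rightarrow> (pt \<Rightarrow> pt) \<Rightarrow> bool" where
  "is_Lie_symmetry \<gamma> V Q \<longleftrightarrow>
     (\<forall>J. base J \<in> Omega \<longrightarrow> nls \<gamma> V J = 0 \<longrightarrow>
        pr2 Q (\<lambda>K. Re (nls \<gamma> V K)) J = 0 \<and> pr2 Q (\<lambda>K. Im (nls \<gamma> V K)) J = 0)"

definition A_max :: "real \<Rightarrow> (real \<times> real \<Rightarrow> complex) \<Rightarrow> (pt \<Rightarrow> pt) set" where
  "A_max \<gamma> V = {Q. Cinf_on Omega Q \<and> is_Lie_symmetry \<gamma> V Q}"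

end

theory Submission
  imports Defs
begin


definition P1 :: "(pt \<Rightarrow> real) \<Rightarrow> pt \<Rightarrow> real" where
  "P1 F p = (case p of (t,x,u,v) \<Rightarrow> deriv (\<lambda>s. F (s,x,u,v)) t)"
definition P2 :: "(pt \<Rightarrow> real) \<Rightarrow> pt \<Rightarrow> real" where
  "P2 F p = (case p of (t,x,u,v) \<Rightarrow> deriv (\<lambda>s. F (t,s,u,v)) x)"
definition P3 :: "(pt \<Rightarrow> real) \<Rightarrow> pt \<Rightarrow> real" where
  "P3 F p = (case p of (t,x,u,v) \<Rightarrow> deriv (\<lambda>s. F (t,x,s,v)) u)"
definition P4 :: "(pt \<Rightarrow> real) \<Rightarrow> pt \<Rightarrow> real" where
  "P4 F p = (case p of (t,x,u,v) \<Rightarrow> deriv (\<lambda>s. F (t,x,u,s)) v)"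

lemma base_upd[simp]:
  "base (jut_update f J) = base J" "base (jvt_update f J) = base J"
  "base (jux_update f J) = base J" "base (jvx_update f J) = base J"
  "base (jutt_update f J) = base J" "base (jutx_update f J) = base J" "base (juxx_update f J) = base J"
  "base (jvtt_update f J) = base J" "base (jvtx_update f J) = base J" "base (jvxx_update f J) = base J"
  by (simp_all add: base_def)

lemma jpd_lift:
  "jpd jt_update jt (lift F) J = P1 F (base J)"
  "jpd jx_update jx (lift F) J = P2 F (base J)"
  "jpd ju_update ju (lift F) J = P3 F (base J)"
  "jpd jv_update jv (lift F) J = P4 F (base J)"
  "jpd jut_update jut (lift F) J = 0" "jpd jvt_update jvt (lift F) J = 0"
  "jpd jux_update jux (lift F) J = 0" "jpd jvx_update jvx (lift F) J = 0"
  by (simp_all add: jpd_def lift_def base_def P1_def P2_def P3_def P4_def)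

lemma Dt_lift: "Dt (lift F) J = P1 F (base J) + jut J * P3 F (base J) + jvt J * P4 F (base J)"
  by (simp add: Dt_def jpd_lift)
lemma Dx_lift: "Dx (lift F) J = P2 F (base J) + jux J * P3 F (base J) + jvx J * P4 F (base J)"
  by (simp add: Dx_def jpd_lift)

lemma Omega_iff: "(t,x,u,v) \<in> Omega \<longleftrightarrow> u \<noteq> 0 \<or> v \<noteq> 0"
  by (auto simp: Omega_def)

lemma ev_u: "(u,v) \<noteq> (0::real,0::real) \<Longrightarrow> eventually (\<lambda>s. (s,v) \<noteq> (0,0)) (nhds u)"
proof -
  assume a: "(u,v) \<noteq> (0,0)"
  have o: "open {s::real. (s,v) \<noteq> (0,0)}"
  proof (cases "v = 0")
    case True
    then have "{s::real. (s,v) \<noteq> (0,0)} = - {0}" by auto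
    then show ?thesis by (simp add: open_Compl)
  next
    case False then show ?thesis by simp
  qed
  have "eventually (\<lambda>s. s \<in> {s::real. (s,v) \<noteq> (0,0)}) (nhds u)"
    by (rule eventually_nhds_in_open[OF o]) (use a in auto)
  then show ?thesis by simp
qed

lemma ev_v: "(u,v) \<noteq> (0::real,0::real) \<Longrightarrow> eventually (\<lambda>s. (u,s) \<noteq> (0,0)) (nhds v)"
proof -
  assume "(u,v) \<noteq> (0::real,0::real)"
  then have "(v,u) \<noteq> (0::real,0::real)" by auto
  from ev_u[OF this] show ?thesis by (rule eventually_mono) auto
qed

lemma P_local:
  assumes "p \<in> Omega" "\<And>q. q \<in> Omega \<Longrightarrow> F q = G q"
  shows "P1 F p = P1 G p" "P2 F p = P2 G p" "P3 F p = P3 G p" "P4 F p = P4 G p"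
proof -
  obtain t x u v where p: "p = (t,x,u,v)" by (cases p) auto
  have uv: "(u,v) \<noteq> (0,0)" using assms(1) p by (auto simp: Omega_def)
  show "P1 F p = P1 G p" using assms p by (auto simp: P1_def Omega_def intro!: arg_cong[where f="\<lambda>f. deriv f t"])
  show "P2 F p = P2 G p" using assms p by (auto simp: P2_def Omega_def intro!: arg_cong[where f="\<lambda>f. deriv f x"])
  show "P3 F p = P3 G p" unfolding p P3_def prod.case
    apply (rule deriv_cong_ev[OF _ refl])
    using ev_u[OF uv] apply (rule eventually_mono)
    by (rule assms(2)) (simp add: Omega_def)
  show "P4 F p = P4 G p" unfolding p P4_def prod.case
    apply (rule deriv_cong_ev[OF _ refl])
    using ev_v[OF uv] apply (rule eventually_mono)
    by (rule assms(2)) (simp add: Omega_def)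
qed

lemma P_zero:
  assumes "p \<in> Omega" "\<And>q. q \<in> Omega \<Longrightarrow> F q = 0"
  shows "P1 F p = 0" "P2 F p = 0" "P3 F p = 0" "P4 F p = 0"
  using P_local[OF assms(1), of F "\<lambda>_. 0"] assms(2)
  by (simp_all add: P1_def P2_def P3_def P4_def split: prod.splits)



lemma Dloc:
  assumes J: "base J \<in> Omega" and GH: "\<And>K. base K \<in> Omega \<Longrightarrow> G K = H K"
  shows "Dx G J = Dx H J" "Dt G J = Dt H J"
proof -
  have uv: "(ju J, jv J) \<noteq> (0,0)" using J by (simp add: base_def Omega_def)
  have e1: "G (upd J) = H (upd J)" if "base (upd J) = base J" for upd using GH J that by simp
  have jt: "jpd jt_update jt G J = jpd jt_update jt H J"
    unfolding jpd_def by (rule arg_cong[where f="\<lambda>f. deriv f _"], rule ext, rule GH, use J in \<open>simp add: base_def Omega_def\<close>)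
  have jx: "jpd jx_update jx G J = jpd jx_update jx H J"
    unfolding jpd_def by (rule arg_cong[where f="\<lambda>f. deriv f _"], rule ext, rule GH, use J in \<open>simp add: base_def Omega_def\<close>)
  have ju: "jpd ju_update ju G J = jpd ju_update ju H J"
    unfolding jpd_def
    apply (rule deriv_cong_ev[OF _ refl])
    using ev_u[OF uv] apply (rule eventually_mono)
    by (rule GH) (simp add: base_def Omega_def)
  have jv: "jpd jv_update jv G J = jpd jv_update jv H J"
    unfolding jpd_def
    apply (rule deriv_cong_ev[OF _ refl])
    using ev_v[OF uv] apply (rule eventually_mono)
    by (rule GH) (simp add: base_def Omega_def)
  have o: "jpd jut_update jut G J = jpd jut_update jut H J"
     "jpd jvt_update jvt G J = jpd jvt_update jvt H J"
     "jpd jux_update jux G J = jpd jux_update jux H J"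
     "jpd jvx_update jvx G J = jpd jvx_update jvx H J"
    unfolding jpd_def
    by (rule arg_cong[where f="\<lambda>f. deriv f _"], rule ext, rule GH, use J in simp)+
  show "Dx G J = Dx H J" "Dt G J = Dt H J" unfolding Dx_def Dt_def using jt jx ju jv o by simp_all
qed

definition NN :: "real \<Rightarrow> real \<Rightarrow> real \<Rightarrow> real" where
  "NN \<gamma> u v = cmod (Complex u v) powr \<gamma>"
definition KK :: "real \<Rightarrow> real \<Rightarrow> real \<Rightarrow> real" where
  "KK \<gamma> u v = \<gamma> * cmod (Complex u v) powr (\<gamma> - 1) / cmod (Complex u v)"

lemma DERIV_NN_u:
  assumes "(u,v) \<noteq> (0,0)"
  shows "DERIV (\<lambda>s. NN \<gamma> s v) u :> KK \<gamma> u v * u"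
proof -
  have pos: "u^2 + v^2 > 0" using assms by (auto simp: sum_power2_gt_zero_iff)
  have "DERIV (\<lambda>s. sqrt (s^2 + v^2) powr \<gamma>) u :> KK \<gamma> u v * u"
  proof -
    have g: "DERIV (\<lambda>s. sqrt (s^2 + v^2)) u :> inverse (sqrt (u^2+v^2)) / 2 * (2 * u)"
      apply (rule DERIV_chain2[where f=sqrt])
      using pos by (auto intro!: derivative_eq_intros DERIV_real_sqrt)
    have "DERIV (\<lambda>s. sqrt (s^2 + v^2) powr \<gamma>) u :> (sqrt (u^2+v^2) powr \<gamma>) * (0 * ln (sqrt (u^2+v^2)) + (inverse (sqrt (u^2+v^2)) / 2 * (2 * u)) * \<gamma> / sqrt (u^2+v^2))"
      by (rule DERIV_powr[OF g]) (use pos in auto)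
    moreover have "(sqrt (u^2+v^2) powr \<gamma>) * (0 * ln (sqrt (u^2+v^2)) + (inverse (sqrt (u^2+v^2)) / 2 * (2 * u)) * \<gamma> / sqrt (u^2+v^2)) = KK \<gamma> u v * u"
      using pos by (simp add: KK_def complex_norm powr_diff field_simps)
    ultimately show ?thesis by simp
  qed
  then show ?thesis by (simp add: NN_def complex_norm)
qed

lemma DERIV_NN_v:
  assumes "(u,v) \<noteq> (0,0)"
  shows "DERIV (\<lambda>s. NN \<gamma> u s) v :> KK \<gamma> u v * v"
proof -
  have pos: "u^2 + v^2 > 0" using assms by (auto simp: sum_power2_gt_zero_iff)
  have "DERIV (\<lambda>s. sqrt (u^2 + s^2) powr \<gamma>) v :> KK \<gamma> u v * v"
  proof -
    have g: "DERIV (\<lambda>s. sqrt (u^2 + s^2)) v :> inverse (sqrt (u^2+v^2)) / 2 * (2 * v)"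
      apply (rule DERIV_chain2[where f=sqrt])
      using pos by (auto intro!: derivative_eq_intros DERIV_real_sqrt)
    have "DERIV (\<lambda>s. sqrt (u^2 + s^2) powr \<gamma>) v :> (sqrt (u^2+v^2) powr \<gamma>) * (0 * ln (sqrt (u^2+v^2)) + (inverse (sqrt (u^2+v^2)) / 2 * (2 * v)) * \<gamma> / sqrt (u^2+v^2))"
      by (rule DERIV_powr[OF g]) (use pos in auto)
    moreover have "(sqrt (u^2+v^2) powr \<gamma>) * (0 * ln (sqrt (u^2+v^2)) + (inverse (sqrt (u^2+v^2)) / 2 * (2 * v)) * \<gamma> / sqrt (u^2+v^2)) = KK \<gamma> u v * v"
      using pos by (simp add: KK_def complex_norm powr_diff field_simps)
    ultimately show ?thesis by simp
  qed
  then show ?thesis by (simp add: NN_def complex_norm)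
qed

lemma Re_nls: "Re (nls \<gamma> V J) = - jvt J + juxx J + NN \<gamma> (ju J) (jv J) * ju J
   + Re (V (jt J, jx J)) * ju J - Im (V (jt J, jx J)) * jv J"
  by (simp add: nls_def NN_def)
lemma Im_nls: "Im (nls \<gamma> V J) = jut J + jvxx J + NN \<gamma> (ju J) (jv J) * jv J
   + Im (V (jt J, jx J)) * ju J + Re (V (jt J, jx J)) * jv J"
  by (simp add: nls_def NN_def)



abbreviation FRe where "FRe \<gamma> V \<equiv> (\<lambda>K. Re (nls \<gamma> V K))"
abbreviation FIm where "FIm \<gamma> V \<equiv> (\<lambda>K. Im (nls \<gamma> V K))"

lemma jpd_FRe:
  assumes J: "base J \<in> Omega"
  shows "jpd ju_update ju (FRe \<gamma> V) J = NN \<gamma> (ju J) (jv J) + KK \<gamma> (ju J) (jv J) * ju J * ju J + Re (V (jt J, jx J))"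
    "jpd jv_update jv (FRe \<gamma> V) J = KK \<gamma> (ju J) (jv J) * jv J * ju J - Im (V (jt J, jx J))"
    "jpd jut_update jut (FRe \<gamma> V) J = 0" "jpd jvt_update jvt (FRe \<gamma> V) J = -1"
    "jpd jux_update jux (FRe \<gamma> V) J = 0" "jpd jvx_update jvx (FRe \<gamma> V) J = 0"
    "jpd jutt_update jutt (FRe \<gamma> V) J = 0" "jpd jutx_update jutx (FRe \<gamma> V) J = 0"
    "jpd juxx_update juxx (FRe \<gamma> V) J = 1" "jpd jvtt_update jvtt (FRe \<gamma> V) J = 0"
    "jpd jvtx_update jvtx (FRe \<gamma> V) J = 0" "jpd jvxx_update jvxx (FRe \<gamma> V) J = 0"
proof -
  have uv: "(ju J, jv J) \<noteq> (0,0)" using J by (simp add: base_def Omega_def)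
  show "jpd ju_update ju (FRe \<gamma> V) J = NN \<gamma> (ju J) (jv J) + KK \<gamma> (ju J) (jv J) * ju J * ju J + Re (V (jt J, jx J))"
    unfolding jpd_def Re_nls
    by (rule DERIV_imp_deriv) (auto intro!: derivative_eq_intros DERIV_NN_u[OF uv])
  show "jpd jv_update jv (FRe \<gamma> V) J = KK \<gamma> (ju J) (jv J) * jv J * ju J - Im (V (jt J, jx J))"
    unfolding jpd_def Re_nls
    by (rule DERIV_imp_deriv) (auto intro!: derivative_eq_intros DERIV_NN_v[OF uv])
qed (unfold jpd_def Re_nls, (rule DERIV_imp_deriv, auto intro!: derivative_eq_intros)+)

lemma jpd_FIm:
  assumes J: "base J \<in> Omega"
  shows "jpd ju_update ju (FIm \<gamma> V) J = KK \<gamma> (ju J) (jv J) * ju J * jv J + Im (V (jt J, jx J))"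
    "jpd jv_update jv (FIm \<gamma> V) J = NN \<gamma> (ju J) (jv J) + KK \<gamma> (ju J) (jv J) * jv J * jv J + Re (V (jt J, jx J))"
    "jpd jut_update jut (FIm \<gamma> V) J = 1" "jpd jvt_update jvt (FIm \<gamma> V) J = 0"
    "jpd jux_update jux (FIm \<gamma> V) J = 0" "jpd jvx_update jvx (FIm \<gamma> V) J = 0"
    "jpd jutt_update jutt (FIm \<gamma> V) J = 0" "jpd jutx_update jutx (FIm \<gamma> V) J = 0"
    "jpd juxx_update juxx (FIm \<gamma> V) J = 0" "jpd jvtt_update jvtt (FIm \<gamma> V) J = 0"
    "jpd jvtx_update jvtx (FIm \<gamma> V) J = 0" "jpd jvxx_update jvxx (FIm \<gamma> V) J = 1"
proof -
  have uv: "(ju J, jv J) \<noteq> (0,0)" using J by (simp add: base_def Omega_def)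
  show "jpd ju_update ju (FIm \<gamma> V) J = KK \<gamma> (ju J) (jv J) * ju J * jv J + Im (V (jt J, jx J))"
    unfolding jpd_def Im_nls
    by (rule DERIV_imp_deriv) (auto intro!: derivative_eq_intros DERIV_NN_u[OF uv])
  show "jpd jv_update jv (FIm \<gamma> V) J = NN \<gamma> (ju J) (jv J) + KK \<gamma> (ju J) (jv J) * jv J * jv J + Re (V (jt J, jx J))"
    unfolding jpd_def Im_nls
    by (rule DERIV_imp_deriv) (auto intro!: derivative_eq_intros DERIV_NN_v[OF uv])
qed (unfold jpd_def Im_nls, (rule DERIV_imp_deriv, auto intro!: derivative_eq_intros)+)

lemma pr2_Re:
  assumes J: "base J \<in> Omega"
  shows "pr2 Q (FRe \<gamma> V) J = lift (tau Q) J * jpd jt_update jt (FRe \<gamma> V) J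
     + lift (xi Q) J * jpd jx_update jx (FRe \<gamma> V) J
     + etaU Q (base J) * (NN \<gamma> (ju J) (jv J) + KK \<gamma> (ju J) (jv J) * ju J * ju J + Re (V (jt J, jx J)))
     + etaV Q (base J) * (KK \<gamma> (ju J) (jv J) * jv J * ju J - Im (V (jt J, jx J)))
     - prc Q Dt (lift (etaV Q)) jvt jvx J
     + prc Q Dx (prc Q Dx (lift (etaU Q)) jut jux) jutx juxx J"
  unfolding pr2_def Let_def jpd_FRe[OF J] by (simp add: lift_def)

lemma pr2_Im:
  assumes J: "base J \<in> Omega"
  shows "pr2 Q (FIm \<gamma> V) J = lift (tau Q) J * jpd jt_update jt (FIm \<gamma> V) J
     + lift (xi Q) J * jpd jx_update jx (FIm \<gamma> V) J
     + etaU Q (base J) * (KK \<gamma> (ju J) (jv J) * ju J * jv J + Im (V (jt J, jx J)))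
     + etaV Q (base J) * (NN \<gamma> (ju J) (jv J) + KK \<gamma> (ju J) (jv J) * jv J * jv J + Re (V (jt J, jx J)))
     + prc Q Dt (lift (etaU Q)) jut jux J
     + prc Q Dx (prc Q Dx (lift (etaV Q)) jvt jvx) jvtx jvxx J"
  unfolding pr2_def Let_def jpd_FIm[OF J] by (simp add: lift_def)



definition ZZ :: "(pt \<Rightarrow> pt) \<Rightarrow> bool" where
  "ZZ Q \<longleftrightarrow> (\<forall>q\<in>Omega. tau Q q = 0 \<and> xi Q q = 0)"

lemma ZZ_P:
  assumes "ZZ Q" "base J \<in> Omega"
  shows "Dt (lift (tau Q)) J = 0" "Dx (lift (tau Q)) J = 0"
        "Dt (lift (xi Q)) J = 0" "Dx (lift (xi Q)) J = 0"
  using assms P_zero[OF assms(2), of "tau Q"] P_zero[OF assms(2), of "xi Q"]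
  by (auto simp: Dt_lift Dx_lift ZZ_def)

lemma prc1:
  assumes "ZZ Q" "base J \<in> Omega"
  shows "prc Q Dt (lift F) a b J = P1 F (base J) + jut J * P3 F (base J) + jvt J * P4 F (base J)"
        "prc Q Dx (lift F) a b J = P2 F (base J) + jux J * P3 F (base J) + jvx J * P4 F (base J)"
  using ZZ_P[OF assms] by (simp_all add: prc_def Dt_lift Dx_lift)

lemma prc2:
  fixes F :: "pt \<Rightarrow> real"
  assumes Z: "ZZ Q" and J: "base J \<in> Omega"
  defines "H \<equiv> (\<lambda>K. P2 F (base K) + jux K * P3 F (base K) + jvx K * P4 F (base K))"
  shows "prc Q Dx (prc Q Dx (lift F) a b) c d J =
     jpd jx_update jx H J + jux J * jpd ju_update ju H J + jvx J * jpd jv_update jv H J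
     + juxx J * P3 F (base J) + jvxx J * P4 F (base J)"
proof -
  have "Dx (prc Q Dx (lift F) a b) J = Dx H J"
    by (rule Dloc[OF J]) (simp add: prc1[OF Z] H_def)
  moreover have "jpd jux_update jux H J = P3 F (base J)"
    unfolding jpd_def H_def by (rule DERIV_imp_deriv) (auto intro!: derivative_eq_intros)
  moreover have "jpd jvx_update jvx H J = P4 F (base J)"
    unfolding jpd_def H_def by (rule DERIV_imp_deriv) (auto intro!: derivative_eq_intros)
  moreover have "jpd jut_update jut H J = 0" "jpd jvt_update jvt H J = 0"
    unfolding jpd_def H_def by simp_all
  ultimately show ?thesis using ZZ_P[OF Z J] unfolding prc_def Dx_def by simp
qed

lemma Cinf_affine:
  fixes L :: "'a::euclidean_space \<Rightarrow> 'b::real_normed_vector"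
  assumes L: "bounded_linear L"
  shows "Cinf_on S (\<lambda>p. c + L p)"
proof -
  have hvd: "((\<lambda>s::real. c + L (p + s *\<^sub>R b)) has_vector_derivative L b) (at 0)" for p b
  proof -
    have e: "(\<lambda>s::real. c + L (p + s *\<^sub>R b)) = (\<lambda>s. (c + L p) + s *\<^sub>R L b)"
      using L by (simp add: linear_add linear_scale bounded_linear.linear add.assoc)
    have "((\<lambda>s::real. (c + L p) + s *\<^sub>R L b) has_vector_derivative (0 + ((0::real) *\<^sub>R 0 + 1 *\<^sub>R L b))) (at 0)"
      by (intro has_vector_derivative_add has_vector_derivative_const has_vector_derivative_scaleR DERIV_ident)
    then show ?thesis unfolding e by simp
  qed
  have d1: "dirder b (\<lambda>p. c + L p) = (\<lambda>p. L b)" for b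
  proof
    fix p
    have "((\<lambda>s. c + L (p + s *\<^sub>R b)) has_vector_derivative L b) (at 0)"
      by (rule hvd)
    then show "dirder b (\<lambda>p. c + L p) p = L b" unfolding dirder_def by (rule vector_derivative_at)
  qed
  have d0: "dirder b (\<lambda>p. d) = (\<lambda>p. 0)" for b and d :: 'b
    unfolding dirder_def by (rule ext, rule vector_derivative_at) (rule has_vector_derivative_const)
  have fo: "foldr dirder bs (\<lambda>p. c + L p) = (\<lambda>p. c + L p) \<or> (\<exists>d. foldr dirder bs (\<lambda>p. c + L p) = (\<lambda>p. d))" for bs
    by (induction bs) (auto simp: d1 d0)
  have cf: "continuous_on S (\<lambda>p. c + L p)"
    using L by (intro continuous_intros) (simp add: linear_continuous_on)
  have df: "(\<lambda>s::real. c + L (p + s *\<^sub>R b)) differentiable (at 0)" for p b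
  proof -
    have "((\<lambda>s. c + L (p + s *\<^sub>R b)) has_vector_derivative L b) (at 0)"
      by (rule hvd)
    then show ?thesis by (rule differentiableI_vector)
  qed
  show ?thesis unfolding Cinf_on_def
  proof (intro allI impI conjI ballI)
    fix bs :: "'a list"
    show "continuous_on S (foldr dirder bs (\<lambda>p. c + L p))"
      using fo[of bs] cf by auto
    fix b p
    show "(\<lambda>s. foldr dirder bs (\<lambda>p. c + L p) (p + s *\<^sub>R b)) differentiable at 0"
      using fo[of bs] df[of p b] by auto
  qed
qed

lemma line_diff:
  assumes C: "Cinf_on Omega Q" and p: "p \<in> Omega" and b: "b \<in> Basis" and L: "bounded_linear L"
  shows "(\<lambda>s. L (Q (p + (s - a) *\<^sub>R b))) differentiable (at a)"
proof -
  have "set ([]::pt list) \<subseteq> Basis \<longrightarrow> continuous_on Omega (foldr dirder [] Q) \<and>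
        (\<forall>b\<in>Basis. \<forall>p\<in>Omega. (\<lambda>s::real. foldr dirder [] Q (p + s *\<^sub>R b)) differentiable (at 0))"
    using C unfolding Cinf_on_def by blast
  then have d0: "(\<lambda>s. Q (p + s *\<^sub>R b)) differentiable (at 0)"
    using p b by simp
  have d1: "(\<lambda>s::real. s - a) differentiable (at a)"
    by (auto intro!: derivative_intros)
  have "((\<lambda>s. Q (p + s *\<^sub>R b)) \<circ> (\<lambda>s. s - a)) differentiable (at a)"
    by (rule differentiable_chain_at[OF d1]) (simp add: d0)
  then have "(L \<circ> ((\<lambda>s. Q (p + s *\<^sub>R b)) \<circ> (\<lambda>s. s - a))) differentiable (at a)"
    by (rule differentiable_chain_at) (rule bounded_linear_imp_differentiable[OF L])
  then show ?thesis by (simp add: o_def)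
qed



lemma prc2g:
  assumes Z: "ZZ Q" and J: "base J \<in> Omega"
    and G: "\<And>K. base K \<in> Omega \<Longrightarrow> prc Q Dx (lift F) a b K = G K"
  shows "prc Q Dx (prc Q Dx (lift F) a b) c d J = Dx G J"
proof -
  have "Dx (prc Q Dx (lift F) a b) J = Dx G J" by (rule Dloc[OF J]) (rule G)
  then show ?thesis using ZZ_P[OF Z J] unfolding prc_def by simp
qed

lemma sup_part:
  assumes H: "\<forall>p\<in>Omega. Q p = c *\<^sub>R M_field p"
  shows "is_Lie_symmetry \<gamma> V Q"
proof -
  have Qq: "tau Q q = 0 \<and> xi Q q = 0 \<and> etaU Q q = - c * snd (snd (snd q)) \<and> etaV Q q = c * fst (snd (snd q))"
    if "q \<in> Omega" for q
    using H that by (cases q) (auto simp: tau_def xi_def etaU_def etaV_def M_field_def)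
  have Z: "ZZ Q" using Qq by (simp add: ZZ_def)
  have PU: "P1 (etaU Q) b = 0 \<and> P2 (etaU Q) b = 0 \<and> P3 (etaU Q) b = 0 \<and> P4 (etaU Q) b = - c"
    if b: "b \<in> Omega" for b
  proof -
    have "P1 (etaU Q) b = P1 (\<lambda>q. - c * snd (snd (snd q))) b \<and> P2 (etaU Q) b = P2 (\<lambda>q. - c * snd (snd (snd q))) b
      \<and> P3 (etaU Q) b = P3 (\<lambda>q. - c * snd (snd (snd q))) b \<and> P4 (etaU Q) b = P4 (\<lambda>q. - c * snd (snd (snd q))) b"
      using P_local[OF b, of "etaU Q" "\<lambda>q. - c * snd (snd (snd q))"] Qq by simp
    then show ?thesis by (cases b) (simp add: P1_def P2_def P3_def P4_def)
  qed
  have PV: "P1 (etaV Q) b = 0 \<and> P2 (etaV Q) b = 0 \<and> P3 (etaV Q) b = c \<and> P4 (etaV Q) b = 0"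
    if b: "b \<in> Omega" for b
  proof -
    have "P1 (etaV Q) b = P1 (\<lambda>q. c * fst (snd (snd q))) b \<and> P2 (etaV Q) b = P2 (\<lambda>q. c * fst (snd (snd q))) b
      \<and> P3 (etaV Q) b = P3 (\<lambda>q. c * fst (snd (snd q))) b \<and> P4 (etaV Q) b = P4 (\<lambda>q. c * fst (snd (snd q))) b"
      using P_local[OF b, of "etaV Q" "\<lambda>q. c * fst (snd (snd q))"] Qq by simp
    then show ?thesis by (cases b) (simp add: P1_def P2_def P3_def P4_def)
  qed
  show ?thesis unfolding is_Lie_symmetry_def
  proof (intro allI impI conjI)
    fix J assume J: "base J \<in> Omega" and N: "nls \<gamma> V J = 0"
    have b: "tau Q (base J) = 0" "xi Q (base J) = 0" "etaU Q (base J) = - c * jv J" "etaV Q (base J) = c * ju J"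
      using Qq[OF J] by (simp_all add: base_def)
    have a1: "prc Q Dt (lift (etaV Q)) jvt jvx J = c * jut J"
      using prc1[OF Z J] PV[OF J] by simp
    have a2: "prc Q Dt (lift (etaU Q)) jut jux J = - c * jvt J"
      using prc1[OF Z J] PU[OF J] by simp
    have a3: "prc Q Dx (prc Q Dx (lift (etaU Q)) jut jux) jutx juxx J = - c * jvxx J"
    proof -
      have "prc Q Dx (prc Q Dx (lift (etaU Q)) jut jux) jutx juxx J = Dx (\<lambda>K. - c * jvx K) J"
        by (rule prc2g[OF Z J]) (use prc1[OF Z] PU in simp)
      also have "\<dots> = - c * jvxx J" by (simp add: Dx_def jpd_def)
      finally show ?thesis .
    qed
    have a4: "prc Q Dx (prc Q Dx (lift (etaV Q)) jvt jvx) jvtx jvxx J = c * juxx J"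
    proof -
      have "prc Q Dx (prc Q Dx (lift (etaV Q)) jvt jvx) jvtx jvxx J = Dx (\<lambda>K. c * jux K) J"
        by (rule prc2g[OF Z J]) (use prc1[OF Z] PV in simp)
      also have "\<dots> = c * juxx J" by (simp add: Dx_def jpd_def)
      finally show ?thesis .
    qed
    have "pr2 Q (FRe \<gamma> V) J = - c * Im (nls \<gamma> V J)"
      unfolding pr2_Re[OF J] a1 a3 Im_nls by (simp add: lift_def b algebra_simps)
    then show "pr2 Q (FRe \<gamma> V) J = 0" using N by simp
    have "pr2 Q (FIm \<gamma> V) J = c * Re (nls \<gamma> V J)"
      unfolding pr2_Im[OF J] a2 a4 Re_nls by (simp add: lift_def b algebra_simps)
    then show "pr2 Q (FIm \<gamma> V) J = 0" using N by simp
  qed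
qed



definition mkJ :: "real \<Rightarrow> real \<Rightarrow> real \<Rightarrow> real \<Rightarrow> real \<Rightarrow> real \<Rightarrow> real \<Rightarrow> real \<Rightarrow> real \<Rightarrow> real \<Rightarrow> jet" where
  "mkJ t x u v ut vt ux vx uxx vxx = \<lparr>jt = t, jx = x, ju = u, jv = v, jut = ut, jvt = vt, jux = ux, jvx = vx,
     jutt = 0, jutx = 0, juxx = uxx, jvtt = 0, jvtx = 0, jvxx = vxx\<rparr>"

lemma mkJ_sel[simp]:
  "jt (mkJ t x u v ut vt ux vx uxx vxx) = t" "jx (mkJ t x u v ut vt ux vx uxx vxx) = x"
  "ju (mkJ t x u v ut vt ux vx uxx vxx) = u" "jv (mkJ t x u v ut vt ux vx uxx vxx) = v"
  "jut (mkJ t x u v ut vt ux vx uxx vxx) = ut" "jvt (mkJ t x u v ut vt ux vx uxx vxx) = vt"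
  "jux (mkJ t x u v ut vt ux vx uxx vxx) = ux" "jvx (mkJ t x u v ut vt ux vx uxx vxx) = vx"
  "jutt (mkJ t x u v ut vt ux vx uxx vxx) = 0" "jutx (mkJ t x u v ut vt ux vx uxx vxx) = 0"
  "juxx (mkJ t x u v ut vt ux vx uxx vxx) = uxx" "jvtt (mkJ t x u v ut vt ux vx uxx vxx) = 0"
  "jvtx (mkJ t x u v ut vt ux vx uxx vxx) = 0" "jvxx (mkJ t x u v ut vt ux vx uxx vxx) = vxx"
  "base (mkJ t x u v ut vt ux vx uxx vxx) = (t,x,u,v)"
  by (simp_all add: mkJ_def base_def)

lemma bl1: "bounded_linear (\<lambda>q::real\<times>real. complex_of_real (fst q) * \<alpha>)"
  using bounded_linear_compose[OF bounded_linear_mult_left[of \<alpha>]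
      bounded_linear_compose[OF bounded_linear_of_real bounded_linear_fst]] by simp
lemma bl2: "bounded_linear (\<lambda>q::real\<times>real. complex_of_real (snd q) * \<alpha>)"
  using bounded_linear_compose[OF bounded_linear_mult_left[of \<alpha>]
      bounded_linear_compose[OF bounded_linear_of_real bounded_linear_snd]] by simp

lemma step1:
  assumes S: "\<forall>\<gamma> V. \<gamma> \<noteq> 0 \<and> Cinf_on UNIV V \<longrightarrow> is_Lie_symmetry \<gamma> V Q"
    and p: "(t,x,u,v) \<in> Omega"
  shows "tau Q (t,x,u,v) = 0 \<and> xi Q (t,x,u,v) = 0"
proof -
  define J where "J = mkJ t x u v 0 0 0 0 0 0"
  define N where "N = NN 1 u v"
  have J: "base J \<in> Omega" using p by (simp add: J_def)
  define RR where "RR = etaU Q (t,x,u,v) * (N + KK 1 u v * u * u + - N) + etaV Q (t,x,u,v) * (KK 1 u v * v * u - 0)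
     - prc Q Dt (lift (etaV Q)) jvt jvx J + prc Q Dx (prc Q Dx (lift (etaU Q)) jut jux) jutx juxx J"
  have eqa: "tau Q (t,x,u,v) * (Re \<alpha> * u - Im \<alpha> * v) + RR = 0" for \<alpha>
  proof -
    define V where "V = (\<lambda>q::real\<times>real. (Complex (- N) 0 - complex_of_real t * \<alpha>) + complex_of_real (fst q) * \<alpha>)"
    have "Cinf_on UNIV V" unfolding V_def by (rule Cinf_affine[OF bl1])
    then have L: "is_Lie_symmetry 1 V Q" using S by simp
    have "nls 1 V J = 0"
      by (simp add: nls_def V_def J_def N_def NN_def complex_eq_iff algebra_simps)
    then have "pr2 Q (FRe 1 V) J = 0" using L J unfolding is_Lie_symmetry_def by blast
    moreover have "jpd jt_update jt (FRe 1 V) J = Re \<alpha> * u - Im \<alpha> * v"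
      unfolding jpd_def Re_nls
      by (rule DERIV_imp_deriv) (auto simp: V_def J_def intro!: derivative_eq_intros)
    moreover have "jpd jx_update jx (FRe 1 V) J = 0"
      unfolding jpd_def Re_nls by (simp add: V_def J_def)
    ultimately show ?thesis unfolding pr2_Re[OF J] RR_def
      by (simp add: lift_def J_def V_def N_def)
  qed
  define RX where "RX = etaU Q (t,x,u,v) * (N + KK 1 u v * u * u + - N) + etaV Q (t,x,u,v) * (KK 1 u v * v * u - 0)
     - prc Q Dt (lift (etaV Q)) jvt jvx J + prc Q Dx (prc Q Dx (lift (etaU Q)) jut jux) jutx juxx J"
  have eqb: "xi Q (t,x,u,v) * (Re \<alpha> * u - Im \<alpha> * v) + RX = 0" for \<alpha>
  proof -
    define V where "V = (\<lambda>q::real\<times>real. (Complex (- N) 0 - complex_of_real x * \<alpha>) + complex_of_real (snd q) * \<alpha>)"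
    have "Cinf_on UNIV V" unfolding V_def by (rule Cinf_affine[OF bl2])
    then have L: "is_Lie_symmetry 1 V Q" using S by simp
    have "nls 1 V J = 0"
      by (simp add: nls_def V_def J_def N_def NN_def complex_eq_iff algebra_simps)
    then have "pr2 Q (FRe 1 V) J = 0" using L J unfolding is_Lie_symmetry_def by blast
    moreover have "jpd jx_update jx (FRe 1 V) J = Re \<alpha> * u - Im \<alpha> * v"
      unfolding jpd_def Re_nls
      by (rule DERIV_imp_deriv) (auto simp: V_def J_def intro!: derivative_eq_intros)
    moreover have "jpd jt_update jt (FRe 1 V) J = 0"
      unfolding jpd_def Re_nls by (simp add: V_def J_def)
    ultimately show ?thesis unfolding pr2_Re[OF J] RX_def
      by (simp add: lift_def J_def V_def N_def)
  qed
  have uv: "u \<noteq> 0 \<or> v \<noteq> 0" using p by (simp add: Omega_def)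
  have "tau Q (t,x,u,v) * u = 0" "tau Q (t,x,u,v) * v = 0"
    using eqa[of 0] eqa[of 1] eqa[of "\<i>"] by simp_all
  moreover have "xi Q (t,x,u,v) * u = 0" "xi Q (t,x,u,v) * v = 0"
    using eqb[of 0] eqb[of 1] eqb[of "\<i>"] by simp_all
  ultimately show ?thesis using uv by auto
qed



lemma Cinf_const: "Cinf_on S (\<lambda>p. c)"
  using Cinf_affine[of "\<lambda>p. 0" S c] by (simp add: bounded_linear_zero)

lemma pr2_Re_sp:
  assumes Z: "ZZ Q" and p: "(t,x,u,v) \<in> Omega"
  shows "pr2 Q (FRe \<gamma> V) (mkJ t x u v ut vt 0 0 0 0) =
      etaU Q (t,x,u,v) * (NN \<gamma> u v + KK \<gamma> u v * u * u + Re (V (t, x)))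
     + etaV Q (t,x,u,v) * (KK \<gamma> u v * v * u - Im (V (t, x)))
     - (P1 (etaV Q) (t,x,u,v) + ut * P3 (etaV Q) (t,x,u,v) + vt * P4 (etaV Q) (t,x,u,v))
     + deriv (\<lambda>s. P2 (etaU Q) (t,s,u,v)) x"
proof -
  let ?J = "mkJ t x u v ut vt 0 0 0 0"
  have J: "base ?J \<in> Omega" using p by simp
  have tz: "tau Q (t,x,u,v) = 0" "xi Q (t,x,u,v) = 0" using Z p by (auto simp: ZZ_def)
  show ?thesis
    unfolding pr2_Re[OF J] prc1[OF Z J] prc2[OF Z J]
    by (simp add: lift_def tz jpd_def mkJ_def base_def)
qed

lemma pr2_Im_sp:
  assumes Z: "ZZ Q" and p: "(t,x,u,v) \<in> Omega"
  shows "pr2 Q (FIm \<gamma> V) (mkJ t x u v ut vt 0 0 0 0) =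
      etaU Q (t,x,u,v) * (KK \<gamma> u v * u * v + Im (V (t, x)))
     + etaV Q (t,x,u,v) * (NN \<gamma> u v + KK \<gamma> u v * v * v + Re (V (t, x)))
     + (P1 (etaU Q) (t,x,u,v) + ut * P3 (etaU Q) (t,x,u,v) + vt * P4 (etaU Q) (t,x,u,v))
     + deriv (\<lambda>s. P2 (etaV Q) (t,s,u,v)) x"
proof -
  let ?J = "mkJ t x u v ut vt 0 0 0 0"
  have J: "base ?J \<in> Omega" using p by simp
  have tz: "tau Q (t,x,u,v) = 0" "xi Q (t,x,u,v) = 0" using Z p by (auto simp: ZZ_def)
  show ?thesis
    unfolding pr2_Im[OF J] prc1[OF Z J] prc2[OF Z J]
    by (simp add: lift_def tz jpd_def mkJ_def base_def)
qed

lemma symJ: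
  assumes S: "\<forall>\<gamma> V. \<gamma> \<noteq> 0 \<and> Cinf_on UNIV V \<longrightarrow> is_Lie_symmetry \<gamma> V Q"
    and "\<gamma> \<noteq> 0" "base J \<in> Omega" "nls \<gamma> (\<lambda>_. c) J = 0"
  shows "pr2 Q (FRe \<gamma> (\<lambda>_. c)) J = 0 \<and> pr2 Q (FIm \<gamma> (\<lambda>_. c)) J = 0"
  using S assms(2-4) Cinf_const[of UNIV c] unfolding is_Lie_symmetry_def by blast

lemma cm_pos: "(u,v) \<noteq> (0,0) \<Longrightarrow> cmod (Complex u v) > 0"
  by (simp add: complex_eq_iff)
lemma KK_pos: "(u,v) \<noteq> (0,0) \<Longrightarrow> KK 1 u v > 0"
  using cm_pos[of u v] by (simp add: KK_def)
lemma KK_neg: "(u,v) \<noteq> (0,0) \<Longrightarrow> KK (-1) u v < 0"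
  using cm_pos[of u v] by (simp add: KK_def divide_neg_pos)

lemma step2:
  assumes S: "\<forall>\<gamma> V. \<gamma> \<noteq> 0 \<and> Cinf_on UNIV V \<longrightarrow> is_Lie_symmetry \<gamma> V Q"
    and Z: "ZZ Q" and p: "(t,x,u,v) \<in> Omega"
  shows "etaU Q (t,x,u,v) * u + etaV Q (t,x,u,v) * v = 0"
proof -
  let ?J = "mkJ t x u v 0 0 0 0 0 0"
  let ?X = "etaU Q (t,x,u,v) * u + etaV Q (t,x,u,v) * v"
  have uv: "(u,v) \<noteq> (0,0)" using p by (simp add: Omega_def)
  have eq: "KK \<gamma> u v * u * ?X = (P1 (etaV Q) (t,x,u,v)) - deriv (\<lambda>s. P2 (etaU Q) (t,s,u,v)) x
      \<and> KK \<gamma> u v * v * ?X = - (P1 (etaU Q) (t,x,u,v)) - deriv (\<lambda>s. P2 (etaV Q) (t,s,u,v)) x"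
    if g: "\<gamma> \<noteq> 0" for \<gamma>
  proof -
    have "nls \<gamma> (\<lambda>_. Complex (- NN \<gamma> u v) 0) ?J = 0"
      by (simp add: nls_def NN_def complex_eq_iff)
    from symJ[OF S g _ this] p
    have "pr2 Q (FRe \<gamma> (\<lambda>_. Complex (- NN \<gamma> u v) 0)) ?J = 0" "pr2 Q (FIm \<gamma> (\<lambda>_. Complex (- NN \<gamma> u v) 0)) ?J = 0"
      by auto
    then show ?thesis
      unfolding pr2_Re_sp[OF Z p] pr2_Im_sp[OF Z p] by (simp add: algebra_simps)
  qed
  from eq[of 1] eq[of "-1"] have "(KK 1 u v - KK (-1) u v) * (u * ?X) = 0"
       "(KK 1 u v - KK (-1) u v) * (v * ?X) = 0"
    by (simp_all add: algebra_simps)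
  moreover have "KK 1 u v - KK (-1) u v \<noteq> 0" using KK_pos[OF uv] KK_neg[OF uv] by simp
  ultimately have "u * ?X = 0" "v * ?X = 0" by simp_all
  then show ?thesis using uv by auto
qed



lemma step3:
  assumes S: "\<forall>\<gamma> V. \<gamma> \<noteq> 0 \<and> Cinf_on UNIV V \<longrightarrow> is_Lie_symmetry \<gamma> V Q"
    and Z: "ZZ Q" and p: "(t,x,u,v) \<in> Omega"
  shows "P3 (etaU Q) (t,x,u,v) = 0 \<and> P4 (etaV Q) (t,x,u,v) = 0"
proof -
  have uv: "(u,v) \<noteq> (0,0)" using p by (simp add: Omega_def)
  define r where "r = u^2 + v^2"
  have r: "r > 0" using uv by (auto simp: r_def sum_power2_gt_zero_iff)
  define N where "N = NN 1 u v"
  have X: "etaU Q (t,x,u,v) * u + etaV Q (t,x,u,v) * v = 0" by (rule step2[OF S Z p])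
  have g: "(1::real) \<noteq> 0" by simp
  have n0: "nls 1 (\<lambda>_. Complex (- N) 0) (mkJ t x u v 0 0 0 0 0 0) = 0"
    by (simp add: nls_def NN_def N_def complex_eq_iff)
  have n1: "nls 1 (\<lambda>_. Complex (- N - v / r) (- u / r)) (mkJ t x u v 1 0 0 0 0 0) = 0"
    using r by (simp add: nls_def NN_def N_def complex_eq_iff field_simps r_def) (use uv in \<open>simp add: add_divide_distrib[symmetric] power2_eq_square\<close>)
  have n2: "nls 1 (\<lambda>_. Complex (u / r - N) (- v / r)) (mkJ t x u v 0 1 0 0 0 0) = 0"
    using r by (simp add: nls_def NN_def N_def complex_eq_iff field_simps r_def) (use uv in \<open>simp add: add_divide_distrib[symmetric] power2_eq_square\<close>)
  have e0: "pr2 Q (FRe 1 (\<lambda>_. Complex (- N) 0)) (mkJ t x u v 0 0 0 0 0 0) = 0 \<and>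
            pr2 Q (FIm 1 (\<lambda>_. Complex (- N) 0)) (mkJ t x u v 0 0 0 0 0 0) = 0"
    by (rule symJ[OF S g _ n0]) (use p in simp)
  have e1: "pr2 Q (FIm 1 (\<lambda>_. Complex (- N - v / r) (- u / r))) (mkJ t x u v 1 0 0 0 0 0) = 0"
    using symJ[OF S g _ n1] p by simp
  have e2: "pr2 Q (FRe 1 (\<lambda>_. Complex (u / r - N) (- v / r))) (mkJ t x u v 0 1 0 0 0 0) = 0"
    using symJ[OF S g _ n2] p by simp
  from e0 e1 have "P3 (etaU Q) (t,x,u,v) = etaU Q (t,x,u,v) * u / r + etaV Q (t,x,u,v) * v / r"
    unfolding pr2_Re_sp[OF Z p] pr2_Im_sp[OF Z p]
    by (simp add: algebra_simps N_def; linarith)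
  moreover from e0 e2 have "P4 (etaV Q) (t,x,u,v) = etaU Q (t,x,u,v) * u / r + etaV Q (t,x,u,v) * v / r"
    unfolding pr2_Re_sp[OF Z p] pr2_Im_sp[OF Z p]
    by (simp add: algebra_simps N_def; linarith)
  moreover have "etaU Q (t,x,u,v) * u / r + etaV Q (t,x,u,v) * v / r = 0"
    using X by (simp add: add_divide_distrib[symmetric])
  ultimately show ?thesis using X by simp
qed



lemma bl_etaU: "bounded_linear (\<lambda>z::pt. fst (snd (snd z)))"
  by (intro bounded_linear_compose[OF bounded_linear_fst] bounded_linear_compose[OF bounded_linear_snd] bounded_linear_snd)
lemma bl_etaV: "bounded_linear (\<lambda>z::pt. snd (snd (snd z)))"
  by (intro bounded_linear_compose[OF bounded_linear_snd] bounded_linear_compose[OF bounded_linear_snd] bounded_linear_snd)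

lemma basis_pt:
  "((1::real),(0::real),(0::real),(0::real)) \<in> Basis" "((0::real),(1::real),(0::real),(0::real)) \<in> Basis"
  "((0::real),(0::real),(1::real),(0::real)) \<in> Basis" "((0::real),(0::real),(0::real),(1::real)) \<in> Basis"
  by (auto simp: Basis_prod_def zero_prod_def)

lemma diff_lines:
  assumes C: "Cinf_on Omega Q" and L: "bounded_linear L"
  shows "(t,x,u,v) \<in> Omega \<Longrightarrow> (\<lambda>s. L (Q (s,x,u,v))) differentiable (at t)"
    "(t,x,u,v) \<in> Omega \<Longrightarrow> (\<lambda>s. L (Q (t,s,u,v))) differentiable (at x)"
    "(t,x,u,v) \<in> Omega \<Longrightarrow> (\<lambda>s. L (Q (t,x,s,v))) differentiable (at u)"
    "(t,x,u,v) \<in> Omega \<Longrightarrow> (\<lambda>s. L (Q (t,x,u,s))) differentiable (at v)"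
proof -
  assume p: "(t,x,u,v) \<in> Omega"
  show "(\<lambda>s. L (Q (s,x,u,v))) differentiable (at t)"
    using line_diff[OF C p basis_pt(1) L, of t] by simp
  show "(\<lambda>s. L (Q (t,s,u,v))) differentiable (at x)"
    using line_diff[OF C p basis_pt(2) L, of x] by simp
  show "(\<lambda>s. L (Q (t,x,s,v))) differentiable (at u)"
    using line_diff[OF C p basis_pt(3) L, of u] by simp
  show "(\<lambda>s. L (Q (t,x,u,s))) differentiable (at v)"
    using line_diff[OF C p basis_pt(4) L, of v] by simp
qed

lemma DERIV_U3:
  assumes C: "Cinf_on Omega Q" and p: "(t,x,u,v) \<in> Omega"
  shows "DERIV (\<lambda>s. etaU Q (t,x,s,v)) u :> P3 (etaU Q) (t,x,u,v)"
  using diff_lines(3)[OF C bl_etaU p] by (simp add: DERIV_deriv_iff_real_differentiable P3_def etaU_def)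
lemma DERIV_V4:
  assumes C: "Cinf_on Omega Q" and p: "(t,x,u,v) \<in> Omega"
  shows "DERIV (\<lambda>s. etaV Q (t,x,u,s)) v :> P4 (etaV Q) (t,x,u,v)"
  using diff_lines(4)[OF C bl_etaV p] by (simp add: DERIV_deriv_iff_real_differentiable P4_def etaV_def)
lemma DERIV_V1:
  assumes C: "Cinf_on Omega Q" and p: "(t,x,u,v) \<in> Omega"
  shows "DERIV (\<lambda>s. etaV Q (s,x,u,v)) t :> P1 (etaV Q) (t,x,u,v)"
  using diff_lines(1)[OF C bl_etaV p] by (simp add: DERIV_deriv_iff_real_differentiable P1_def etaV_def)
lemma DERIV_V2:
  assumes C: "Cinf_on Omega Q" and p: "(t,x,u,v) \<in> Omega"
  shows "DERIV (\<lambda>s. etaV Q (t,s,u,v)) x :> P2 (etaV Q) (t,x,u,v)"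
  using diff_lines(2)[OF C bl_etaV p] by (simp add: DERIV_deriv_iff_real_differentiable P2_def etaV_def)

lemma formula:
  assumes C: "Cinf_on Omega Q" and S: "\<forall>\<gamma> V. \<gamma> \<noteq> 0 \<and> Cinf_on UNIV V \<longrightarrow> is_Lie_symmetry \<gamma> V Q"
    and Z: "ZZ Q" and p: "(t,x,u,v) \<in> Omega"
  shows "etaU Q (t,x,u,v) = - etaV Q (t,x,1,1) * v \<and> etaV Q (t,x,u,v) = etaV Q (t,x,1,1) * u"
proof -
  have cu: "etaU Q (t,x,u',v') = etaU Q (t,x,1,v')" if "v' \<noteq> 0" for u' v'
  proof -
    have "\<forall>s. DERIV (\<lambda>s. etaU Q (t,x,s,v')) s :> 0"
    proof
      fix s have ps: "(t,x,s,v') \<in> Omega" using that by (simp add: Omega_def)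
      show "DERIV (\<lambda>s. etaU Q (t,x,s,v')) s :> 0"
        using DERIV_U3[OF C ps] step3[OF S Z ps] by simp
    qed
    then show ?thesis by (rule DERIV_isconst_all)
  qed
  have cv: "etaV Q (t,x,u',v') = etaV Q (t,x,u',1)" if "u' \<noteq> 0" for u' v'
  proof -
    have "\<forall>s. DERIV (\<lambda>s. etaV Q (t,x,u',s)) s :> 0"
    proof
      fix s have ps: "(t,x,u',s) \<in> Omega" using that by (simp add: Omega_def)
      show "DERIV (\<lambda>s. etaV Q (t,x,u',s)) s :> 0"
        using DERIV_V4[OF C ps] step3[OF S Z ps] by simp
    qed
    then show ?thesis by (rule DERIV_isconst_all)
  qed
  have X: "etaU Q (t,x,u',v') * u' + etaV Q (t,x,u',v') * v' = 0" if "u' \<noteq> 0 \<or> v' \<noteq> 0" for u' v'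
    using step2[OF S Z] that by (simp add: Omega_def)
  define c where "c = etaV Q (t,x,1,1)"
  have h1: "etaU Q (t,x,1,v') = - c * v'" if "v' \<noteq> 0" for v'
    using X[of 1 v'] cv[of 1 v'] by (simp add: c_def algebra_simps)
  have h2: "etaV Q (t,x,u',1) = c * u'" if "u' \<noteq> 0" for u'
    using X[of u' 1] cu[of 1 u'] h1[of 1] by (simp add: c_def algebra_simps)
  have uv: "u \<noteq> 0 \<or> v \<noteq> 0" using p by (simp add: Omega_def)
  have A: "etaU Q (t,x,u,v) = - c * v"
  proof (cases "v = 0")
    case True then show ?thesis using X[of u v] uv by simp
  next
    case False then show ?thesis using cu[OF False] h1[OF False] by simp
  qed
  have B: "etaV Q (t,x,u,v) = c * u"
  proof (cases "u = 0")
    case True then show ?thesis using X[of u v] uv by simp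
  next
    case False then show ?thesis using cv[OF False] h2[OF False] by simp
  qed
  show ?thesis using A B by (simp add: c_def)
qed



lemma step4:
  assumes C: "Cinf_on Omega Q" and S: "\<forall>\<gamma> V. \<gamma> \<noteq> 0 \<and> Cinf_on UNIV V \<longrightarrow> is_Lie_symmetry \<gamma> V Q"
    and Z: "ZZ Q"
  shows "P1 (etaV Q) (t,x,1,0) = 0 \<and> P2 (etaV Q) (t,x,1,0) = 0"
proof -
  have p: "(t,x,1,0) \<in> Omega" by (simp add: Omega_def)
  have pr: "(t,s,1,r) \<in> Omega" for s r :: real by (simp add: Omega_def)
  have F1: "etaU Q (t,s,1,r) = - etaV Q (t,s,1,0) * r" for s r
    using formula[OF C S Z pr[of s r]] formula[OF C S Z pr[of s 0]] by simp
  have F2: "P2 (etaU Q) (t,s,1,0) = 0" for s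
    by (simp add: P2_def F1)
  have F3: "P4 (etaU Q) (t,s,1,0) = - etaV Q (t,s,1,0)" for s
    unfolding P4_def prod.case F1
    by (rule DERIV_imp_deriv) (auto intro!: derivative_eq_intros)
  define D where "D = P2 (etaV Q) (t,x,1,0)"
  have dV: "DERIV (\<lambda>s. etaV Q (t,s,1,0)) x :> D" unfolding D_def by (rule DERIV_V2[OF C p])
  have F4: "P2 (etaU Q) (t,x,1,r) = - D * r" for r
    unfolding P2_def prod.case F1
    by (rule DERIV_imp_deriv) (auto intro!: derivative_eq_intros dV)
  have F5: "P4 (etaU Q) (t,x,1,r) = - etaV Q (t,x,1,0)" for r
    unfolding P4_def prod.case F1
    by (rule DERIV_imp_deriv) (auto intro!: derivative_eq_intros)
  define V where "V = (\<lambda>_::real\<times>real. Complex (- NN 1 1 0) 0)"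
  have g: "(1::real) \<noteq> 0" by simp
  have n0: "nls 1 V (mkJ t x 1 0 0 0 0 0 0 0) = 0"
    by (simp add: nls_def NN_def V_def complex_eq_iff)
  have nw: "nls 1 V (mkJ t x 1 0 0 0 0 1 0 0) = 0"
    by (simp add: nls_def NN_def V_def complex_eq_iff)
  have e0: "pr2 Q (FRe 1 V) (mkJ t x 1 0 0 0 0 0 0 0) = 0"
    using symJ[OF S g _ n0[unfolded V_def]] p by (simp add: V_def)
  have ew: "pr2 Q (FRe 1 V) (mkJ t x 1 0 0 0 0 1 0 0) = 0"
    using symJ[OF S g _ nw[unfolded V_def]] p by (simp add: V_def)
  have P1z: "P1 (etaV Q) (t,x,1,0) = 0"
    using e0 unfolding pr2_Re_sp[OF Z p] by (simp add: F1 F2 V_def)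
  let ?J = "mkJ t x 1 0 0 0 0 1 0 0"
  have J: "base ?J \<in> Omega" using p by simp
  have tz: "tau Q (t,x,1,0) = 0" "xi Q (t,x,1,0) = 0" using Z p by (auto simp: ZZ_def)
  define H where "H = (\<lambda>K. P2 (etaU Q) (base K) + jux K * P3 (etaU Q) (base K) + jvx K * P4 (etaU Q) (base K))"
  have Hx: "jpd jx_update jx H ?J = - D"
    unfolding jpd_def H_def
    apply (simp add: mkJ_def base_def F2 F3)
    apply (rule DERIV_imp_deriv)
    by (auto intro!: derivative_eq_intros dV)
  have Hv: "jpd jv_update jv H ?J = - D"
    unfolding jpd_def H_def
    apply (simp add: mkJ_def base_def F4 F5)
    apply (rule DERIV_imp_deriv)
    by (auto intro!: derivative_eq_intros)
  have "pr2 Q (FRe 1 V) ?J = - P1 (etaV Q) (t,x,1,0) - 2 * D"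
    unfolding pr2_Re[OF J] prc1[OF Z J] prc2[OF Z J]
    by (simp add: lift_def tz F1 V_def Hx[unfolded H_def] Hv[unfolded H_def])
  then have "D = 0" using ew P1z by simp
  then show ?thesis using P1z by (simp add: D_def)
qed



lemma sub_part:
  assumes C: "Cinf_on Omega Q" and S: "\<forall>\<gamma> V. \<gamma> \<noteq> 0 \<and> Cinf_on UNIV V \<longrightarrow> is_Lie_symmetry \<gamma> V Q"
  shows "\<exists>c::real. \<forall>p\<in>Omega. Q p = c *\<^sub>R M_field p"
proof -
  have Z: "ZZ Q" unfolding ZZ_def
  proof
    fix q assume "q \<in> Omega"
    then show "tau Q q = 0 \<and> xi Q q = 0" using step1[OF S] by (cases q) auto
  qed
  have p10: "(t,x,1,0) \<in> Omega" for t x :: real by (simp add: Omega_def)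
  have ct: "etaV Q (t,x,1,0) = etaV Q (0,x,1,0)" for t x
  proof -
    have "\<forall>s. DERIV (\<lambda>s. etaV Q (s,x,1,0)) s :> 0"
      using DERIV_V1[OF C p10] step4[OF C S Z] by simp
    then show ?thesis by (rule DERIV_isconst_all)
  qed
  have cx: "etaV Q (0,x,1,0) = etaV Q (0,0,1,0)" for x
  proof -
    have "\<forall>s. DERIV (\<lambda>s. etaV Q (0,s,1,0)) s :> 0"
      using DERIV_V2[OF C p10] step4[OF C S Z] by simp
    then show ?thesis by (rule DERIV_isconst_all)
  qed
  define c where "c = etaV Q (0,0,1,0)"
  have c11: "etaV Q (t,x,1,1) = c" for t x
    using formula[OF C S Z p10[of t x]] ct[of t x] cx[of x] by (simp add: c_def)
  show ?thesis
  proof (intro exI ballI)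
    fix p assume p: "p \<in> Omega"
    obtain t x u v where pe: "p = (t,x,u,v)" by (cases p) auto
    have f: "etaU Q p = - c * v" "etaV Q p = c * u" "tau Q p = 0" "xi Q p = 0"
      using formula[OF C S Z p[unfolded pe]] Z p c11 unfolding pe ZZ_def by auto
    have "Q p = (tau Q p, xi Q p, etaU Q p, etaV Q p)"
      by (simp add: tau_def xi_def etaU_def etaV_def)
    also have "\<dots> = c *\<^sub>R M_field p" using f by (simp add: pe M_field_def)
    finally show "Q p = c *\<^sub>R M_field p" .
  qed
qed

theorem theorem2:
  shows "\<Inter> {A_max \<gamma> V | \<gamma> V. \<gamma> \<noteq> 0 \<and> Cinf_on UNIV V}
       = {Q. Cinf_on Omega Q \<and> (\<exists>c::real. \<forall>p\<in>Omega. Q p = c *\<^sub>R M_field p)}"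
proof (rule set_eqI, rule iffI)
  fix Q assume "Q \<in> \<Inter> {A_max \<gamma> V | \<gamma> V. \<gamma> \<noteq> 0 \<and> Cinf_on UNIV V}"
  then have A: "\<forall>\<gamma> V. \<gamma> \<noteq> 0 \<and> Cinf_on UNIV V \<longrightarrow> Q \<in> A_max \<gamma> V" by blast
  have "Q \<in> A_max 1 (\<lambda>_. 0)" using A Cinf_const[of "UNIV :: (real \<times> real) set" "0::complex"] by simp
  then have C: "Cinf_on Omega Q" by (simp add: A_max_def)
  have S: "\<forall>\<gamma> V. \<gamma> \<noteq> 0 \<and> Cinf_on UNIV V \<longrightarrow> is_Lie_symmetry \<gamma> V Q"
    using A by (simp add: A_max_def)
  show "Q \<in> {Q. Cinf_on Omega Q \<and> (\<exists>c::real. \<forall>p\<in>Omega. Q p = c *\<^sub>R M_field p)}"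
    using C sub_part[OF C S] by simp
next
  fix Q assume "Q \<in> {Q. Cinf_on Omega Q \<and> (\<exists>c::real. \<forall>p\<in>Omega. Q p = c *\<^sub>R M_field p)}"
  then obtain c where C: "Cinf_on Omega Q" and H: "\<forall>p\<in>Omega. Q p = c *\<^sub>R M_field p" by blast
  have "Q \<in> A_max \<gamma> V" for \<gamma> V
    using C sup_part[OF H] by (simp add: A_max_def)
  then show "Q \<in> \<Inter> {A_max \<gamma> V | \<gamma> V. \<gamma> \<noteq> 0 \<and> Cinf_on UNIV V}" by blast
qed

end
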